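(* Let $P\subset\mathbb{R}^d$ with $|P|=n$, let $D=\operatorname{diam}P$ and let $r\in[n]$. Then there is a point $q\in\mathbb{R}^d$ such that the closed ball $B\!\left(q,\frac{3.5D}{\sqrt r}\right)$ intersects the convex hull of at least $r^{-r}\binom nr$ of the $r$-element subsets of $P$.
   Context: $B(q,\rho)$ is the closed Euclidean ball of centre $q$ and radius $\rho$; $\operatorname{diam}$ is the Euclidean diameter. *)

theory Defs
  imports "HOL-Analysis.Analysis"
begin

end

theory Submission
  imports Defs
begin

lemma count_sup:
  assumes "finite P" "A \<subseteq> P" "card A \<le> r"
  shows "card {S. S \<subseteq> P \<and> card S = r \<and> A \<subseteq> S} = (card P - card A) choose (r - card A)"
proof -
  have fA: "finite A" using assms finite_subset by blast
  have "bij_betw (\<lambda>T. T \<union> A) {T. T \<subseteq> P - A \<and> card T = r - card A} {S. S \<subseteq> P \<and> card S = r \<and> A \<subseteq> S}"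
  proof (rule bij_betw_byWitness[where f'="\<lambda>S. S - A"])
    show "\<forall>a\<in>{T. T \<subseteq> P - A \<and> card T = r - card A}. a \<union> A - A = a" by auto
    show "\<forall>a'\<in>{S. S \<subseteq> P \<and> card S = r \<and> A \<subseteq> S}. a' - A \<union> A = a'" by auto
    show "(\<lambda>T. T \<union> A) ` {T. T \<subseteq> P - A \<and> card T = r - card A} \<subseteq> {S. S \<subseteq> P \<and> card S = r \<and> A \<subseteq> S}"
    proof clarify
      fix T assume T: "T \<subseteq> P - A" "card T = r - card A"
      have "finite T" using T assms finite_subset by blast
      then have "card (T \<union> A) = card T + card A" using T fA by (subst card_Un_disjoint) auto
      then show "T \<union> A \<subseteq> P \<and> card (T \<union> A) = r \<and> A \<subseteq> T \<union> A" using T assms by auto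
    qed
    show "(\<lambda>S. S - A) ` {S. S \<subseteq> P \<and> card S = r \<and> A \<subseteq> S} \<subseteq> {T. T \<subseteq> P - A \<and> card T = r - card A}"
    proof clarify
      fix S assume S: "S \<subseteq> P" "A \<subseteq> S" "r = card S"
      have "finite S" using S assms finite_subset by blast
      then show "S - A \<subseteq> P - A \<and> card (S - A) = card S - card A" using S by (auto simp: card_Diff_subset fA)
    qed
  qed
  then have "card {S. S \<subseteq> P \<and> card S = r \<and> A \<subseteq> S} = card {T. T \<subseteq> P - A \<and> card T = r - card A}"
    by (simp add: bij_betw_same_card)
  also have "\<dots> = card (P - A) choose (r - card A)" using assms by (simp add: n_subsets)
  also have "card (P - A) = card P - card A" using assms fA by (simp add: card_Diff_subset)
  finally show ?thesis .
qed

lemma double_count: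
  fixes f :: "'b \<Rightarrow> 'b \<Rightarrow> real"
  assumes "finite P"
  shows "(\<Sum>S\<in>{S. S \<subseteq> P \<and> card S = r}. \<Sum>p\<in>S. \<Sum>q\<in>S. f p q)
    = (\<Sum>p\<in>P. \<Sum>q\<in>P. f p q * real (card {S. S \<subseteq> P \<and> card S = r \<and> {p,q} \<subseteq> S}))"
proof -
  let ?U = "{S. S \<subseteq> P \<and> card S = r}"
  have fU: "finite ?U" using assms by simp
  have "(\<Sum>S\<in>?U. \<Sum>p\<in>S. \<Sum>q\<in>S. f p q) = (\<Sum>S\<in>?U. \<Sum>p\<in>P. \<Sum>q\<in>P. if {p,q} \<subseteq> S then f p q else 0)"
  proof (rule sum.cong[OF refl])
    fix S assume "S \<in> ?U"
    then have SP: "S \<subseteq> P" by auto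
    have "(\<Sum>p\<in>S. \<Sum>q\<in>S. f p q) = (\<Sum>p\<in>P. if p \<in> S then (\<Sum>q\<in>P. if q \<in> S then f p q else 0) else 0)"
      using assms SP by (simp add: sum.inter_filter[symmetric] Int_absorb1 Collect_conj_eq[symmetric]
          Int_def[symmetric] inf.absorb2 conj_commute)
    also have "\<dots> = (\<Sum>p\<in>P. \<Sum>q\<in>P. if {p,q} \<subseteq> S then f p q else 0)"
      by (rule sum.cong[OF refl]) (auto intro: sum.cong)
    finally show "(\<Sum>p\<in>S. \<Sum>q\<in>S. f p q) = (\<Sum>p\<in>P. \<Sum>q\<in>P. if {p,q} \<subseteq> S then f p q else 0)" .
  qed
  also have "\<dots> = (\<Sum>p\<in>P. \<Sum>q\<in>P. \<Sum>S\<in>?U. if {p,q} \<subseteq> S then f p q else 0)"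
    by (simp add: sum.swap[of _ ?U] sum.swap[of _ ?U P])
  also have "\<dots> = (\<Sum>p\<in>P. \<Sum>q\<in>P. f p q * real (card {S. S \<subseteq> P \<and> card S = r \<and> {p,q} \<subseteq> S}))"
  proof (intro sum.cong refl)
    fix p q
    have "(\<Sum>S\<in>?U. if {p,q} \<subseteq> S then f p q else 0) = (\<Sum>S\<in>{S\<in>?U. {p,q} \<subseteq> S}. f p q)"
      by (rule sum.inter_filter[symmetric, OF fU])
    also have "{S\<in>?U. {p,q} \<subseteq> S} = {S. S \<subseteq> P \<and> card S = r \<and> {p,q} \<subseteq> S}" by auto
    finally show "(\<Sum>S\<in>?U. if {p,q} \<subseteq> S then f p q else 0) = f p q * real (card {S. S \<subseteq> P \<and> card S = r \<and> {p,q} \<subseteq> S})"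
      by (simp only: sum_constant mult.commute)
  qed
  finally show ?thesis .
qed

lemma var_bound:
  fixes x :: "'b \<Rightarrow> 'a::real_inner"
  assumes fP: "finite P" and s0: "sum x P = 0" and r2: "2 \<le> r" and rn: "r \<le> card P"
  shows "(\<Sum>S\<in>{S. S \<subseteq> P \<and> card S = r}. (norm (\<Sum>p\<in>S. x p))^2)
     \<le> real ((card P - 1) choose (r - 1)) * (\<Sum>p\<in>P. (norm (x p))^2)"
proof -
  define a where "a = real ((card P - 1) choose (r - 1))"
  define b where "b = real ((card P - 2) choose (r - 2))"
  have N: "real (card {S. S \<subseteq> P \<and> card S = r \<and> {p,q} \<subseteq> S}) = b + (if p = q then a - b else 0)"
    if "p \<in> P" "q \<in> P" for p q
  proof (cases "p = q")
    case True
    then show ?thesis using count_sup[OF fP, of "{p}" r] that r2 by (simp add: a_def)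
  next
    case False
    then show ?thesis using count_sup[OF fP, of "{p,q}" r] that r2 by (simp add: b_def numeral_2_eq_2)
  qed
  have "(\<Sum>S\<in>{S. S \<subseteq> P \<and> card S = r}. (norm (\<Sum>p\<in>S. x p))^2)
      = (\<Sum>S\<in>{S. S \<subseteq> P \<and> card S = r}. \<Sum>p\<in>S. \<Sum>q\<in>S. x p \<bullet> x q)"
    by (simp add: power2_norm_eq_inner inner_sum_left inner_sum_right inner_commute)
  also have "\<dots> = (\<Sum>p\<in>P. \<Sum>q\<in>P. x p \<bullet> x q * real (card {S. S \<subseteq> P \<and> card S = r \<and> {p,q} \<subseteq> S}))"
    by (rule double_count[OF fP])
  also have "\<dots> = (\<Sum>p\<in>P. \<Sum>q\<in>P. b * (x p \<bullet> x q) + (if p = q then (a - b) * (x p \<bullet> x q) else 0))"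
  proof (intro sum.cong refl)
    fix p q assume pq: "p \<in> P" "q \<in> P"
    show "x p \<bullet> x q * real (card {S. S \<subseteq> P \<and> card S = r \<and> {p,q} \<subseteq> S}) =
       b * (x p \<bullet> x q) + (if p = q then (a - b) * (x p \<bullet> x q) else 0)"
      unfolding N[OF pq] by (simp add: algebra_simps)
  qed
  also have "\<dots> = b * (\<Sum>p\<in>P. \<Sum>q\<in>P. x p \<bullet> x q) + (a - b) * (\<Sum>p\<in>P. x p \<bullet> x p)"
    using fP by (simp only: sum.distrib sum_distrib_left sum.delta) simp
  also have "(\<Sum>p\<in>P. \<Sum>q\<in>P. x p \<bullet> x q) = 0"
    by (simp add: inner_sum_left[symmetric] inner_sum_right[symmetric] s0)
  also have "(\<Sum>p\<in>P. x p \<bullet> x p) = (\<Sum>p\<in>P. (norm (x p))^2)"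
    by (simp add: power2_norm_eq_inner)
  finally have eq: "(\<Sum>S\<in>{S. S \<subseteq> P \<and> card S = r}. (norm (\<Sum>p\<in>S. x p))^2) = (a - b) * (\<Sum>p\<in>P. (norm (x p))^2)"
    by simp
  have "b \<ge> 0" by (simp add: b_def)
  moreover have "(\<Sum>p\<in>P. (norm (x p))^2) \<ge> 0" by (simp add: sum_nonneg)
  ultimately show ?thesis unfolding eq a_def[symmetric] by (simp add: mult_right_mono algebra_simps)
qed


theorem theorem7p2:
  fixes P :: "'a::euclidean_space set" and n r :: nat
  assumes "finite P" and "card P = n" and "1 \<le> r" and "r \<le> n"
  shows "\<exists>q::'a. real (card {S. S \<subseteq> P \<and> card S = r \<and>
             convex hull S \<inter> cball q (3.5 * diameter P / sqrt (real r)) \<noteq> {}})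
           \<ge> real (n choose r) / real r ^ r"
proof -
  note fP = assms(1)
  let ?U = "{S. S \<subseteq> P \<and> card S = r}"
  define D where "D = diameter P"
  define \<rho> where "\<rho> = 3.5 * D / sqrt (real r)"
  have bP: "bounded P" using fP by (simp add: finite_imp_bounded)
  have fU: "finite ?U" using fP by simp
  have cardU: "card ?U = n choose r" using fP assms(2) by (simp add: n_subsets)
  have D0: "D \<ge> 0" unfolding D_def using bP by (rule diameter_ge_0)
  have dist_le: "dist p q \<le> D" if "p \<in> P" "q \<in> P" for p q
    unfolding D_def using bP that by (rule diameter_bounded_bound)
  have n0: "n > 0" using assms by linarith
  have rpos: "real r > 0" using assms by simp
  have Gsub: "{S. S \<subseteq> P \<and> card S = r \<and> convex hull S \<inter> cball q \<rho> \<noteq> {}} \<subseteq> ?U" for q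
    by auto
  show ?thesis
  proof (cases "D \<le> \<rho>")
    case True
    have "P \<noteq> {}" using assms n0 by auto
    then obtain p0 where p0: "p0 \<in> P" by auto
    have eqU: "{S. S \<subseteq> P \<and> card S = r \<and> convex hull S \<inter> cball p0 \<rho> \<noteq> {}} = ?U"
    proof (rule subset_antisym[OF Gsub], rule subsetI)
      fix S assume "S \<in> ?U"
      then have S: "S \<subseteq> P" "r = card S" by auto
      then have "S \<noteq> {}" using assms by auto
      then obtain s where s: "s \<in> S" by auto
      have "s \<in> convex hull S" using s by (rule hull_inc)
      moreover have "s \<in> cball p0 \<rho>" using dist_le[OF p0, of s] s S True by auto
      ultimately show "S \<in> {S. S \<subseteq> P \<and> card S = r \<and> convex hull S \<inter> cball p0 \<rho> \<noteq> {}}"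
        using S by auto
    qed
    have "real r ^ r \<ge> 1" using assms by simp
    then have "real (n choose r) / real r ^ r \<le> real (n choose r)"
      by (smt (verit, del_insts) div_by_1 frac_le of_nat_0_le_iff)
    then show ?thesis unfolding \<rho>_def[symmetric] D_def[symmetric] using eqU cardU by (intro exI[of _ p0]) simp
  next
    case False
    then have Dpos: "D > 0" using D0 unfolding \<rho>_def by (cases "D = 0") auto
    have srpos: "sqrt (real r) > 0" using rpos by simp
    have "3.5 * D < D * sqrt (real r)" proof -
      have "3.5 * D / sqrt (real r) < D" using False unfolding \<rho>_def by simp
      then show ?thesis using srpos by (simp only: pos_divide_less_eq)
    qed
    then have sr: "3.5 < sqrt (real r)" using Dpos by (simp add: mult.commute)
    have "(3.5::real)^2 < (sqrt (real r))^2" using sr by (intro power_strict_mono) auto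
    then have r13: "real r > 12.25" by (simp add: power2_eq_square)
    then have r2: "2 \<le> r" by simp
    define c :: 'a where "c = (1 / real n) *\<^sub>R (\<Sum>p\<in>P. p)"
    define x where "x p = p - c" for p
    have sx: "sum x P = 0"
      using n0 assms(2) by (simp add: x_def sum_subtractf c_def sum_constant_scaleR)
    have xD: "norm (x p) \<le> D" if p: "p \<in> P" for p
    proof -
      have "x p = (1 / real n) *\<^sub>R (\<Sum>q\<in>P. p - q)"
        using n0 assms(2) by (simp add: x_def c_def sum_subtractf scaleR_diff_right sum_constant_scaleR)
      then have "norm (x p) = (1 / real n) * norm (\<Sum>q\<in>P. p - q)" by simp
      also have "\<dots> \<le> (1 / real n) * (\<Sum>q\<in>P. D)"
        using dist_le[OF p] by (intro mult_left_mono sum_norm_le) (auto simp: dist_norm)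
      also have "\<dots> = D" using n0 assms(2) by simp
      finally show ?thesis .
    qed
    define m :: "'a set \<Rightarrow> 'a" where "m S = (1 / real r) *\<^sub>R (\<Sum>p\<in>S. p)" for S
    have m_hull: "m S \<in> convex hull S" if "S \<in> ?U" for S
    proof -
      have fS: "finite S" using that fP finite_subset by blast
      have "(\<Sum>j\<in>S. (1 / real r) *\<^sub>R j) \<in> convex hull S"
        by (rule convex_sum[OF fS convex_convex_hull]) (use that rpos in \<open>auto intro: hull_inc\<close>)
      then show ?thesis by (simp add: m_def scaleR_sum_right)
    qed
    have m_c: "norm (m S - c)^2 = (1 / real r)^2 * (norm (\<Sum>p\<in>S. x p))^2" if "S \<in> ?U" for S
    proof -
      have "m S - c = (1 / real r) *\<^sub>R (\<Sum>p\<in>S. x p)"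
        using that rpos by (simp add: m_def x_def sum_subtractf scaleR_diff_right sum_constant_scaleR)
      then show ?thesis by (simp add: power_divide)
    qed
    define a where "a = real ((card P - 1) choose (r - 1))"
    have sumx: "(\<Sum>p\<in>P. (norm (x p))^2) \<le> real n * D^2"
    proof -
      have "(\<Sum>p\<in>P. (norm (x p))^2) \<le> (\<Sum>p\<in>P. D^2)"
        by (intro sum_mono power_mono xD) auto
      then show ?thesis using assms(2) by simp
    qed
    have an: "real n * a = real r * real (n choose r)"
      unfolding a_def assms(2) using times_binomial_minus1_eq[of r n] assms
      by (metis of_nat_mult less_le_trans zero_less_one)
    have total: "(\<Sum>S\<in>?U. (norm (m S - c))^2) \<le> real (n choose r) * D^2 / real r"
    proof -
      have "(\<Sum>S\<in>?U. (norm (m S - c))^2) = (1 / real r)^2 * (\<Sum>S\<in>?U. (norm (\<Sum>p\<in>S. x p))^2)"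
        by (simp add: m_c sum_distrib_left)
      also have "\<dots> \<le> (1 / real r)^2 * (a * (\<Sum>p\<in>P. (norm (x p))^2))"
        unfolding a_def using var_bound[OF fP sx r2] assms by (intro mult_left_mono) auto
      also have "\<dots> \<le> (1 / real r)^2 * (a * (real n * D^2))"
        using sumx by (intro mult_left_mono) (auto simp: a_def)
      also have "\<dots> = real (n choose r) * D^2 / real r"
        using an rpos by (simp add: field_simps power2_eq_square)
      finally show ?thesis .
    qed
    define B where "B = {S \<in> ?U. \<rho> < dist c (m S)}"
    have fB: "finite B" unfolding B_def by (rule finite_subset[OF _ fU]) auto
    have rho2: "\<rho>^2 = 12.25 * D^2 / real r"
      unfolding \<rho>_def using rpos by (simp add: power_divide power_mult_distrib)
    have "real (card B) * \<rho>^2 \<le> (\<Sum>S\<in>B. (norm (m S - c))^2)"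
    proof -
      have "(\<Sum>S\<in>B. \<rho>^2) \<le> (\<Sum>S\<in>B. (norm (m S - c))^2)"
      proof (intro sum_mono)
        fix S assume "S \<in> B"
        then have "\<rho> < norm (m S - c)" by (simp add: B_def dist_norm norm_minus_commute)
        moreover have "\<rho> \<ge> 0" using D0 srpos by (simp add: \<rho>_def)
        ultimately show "\<rho>^2 \<le> (norm (m S - c))^2" by (intro power_mono) auto
      qed
      then show ?thesis by simp
    qed
    also have "\<dots> \<le> (\<Sum>S\<in>?U. (norm (m S - c))^2)"
      by (intro sum_mono2 fU) (auto simp: B_def)
    also have "\<dots> \<le> real (n choose r) * D^2 / real r" by (rule total)
    finally have "real (card B) * (12.25 * D^2 / real r) \<le> real (n choose r) * D^2 / real r"
      by (simp add: rho2)
    then have cB: "real (card B) * 12.25 \<le> real (n choose r)"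
      using Dpos rpos by (simp add: field_simps)
    have sub: "?U - B \<subseteq> {S. S \<subseteq> P \<and> card S = r \<and> convex hull S \<inter> cball c \<rho> \<noteq> {}}"
    proof (rule subsetI)
      fix S assume "S \<in> ?U - B"
      then have S: "S \<subseteq> P" "r = card S" "S \<notin> B" by auto
      then have "m S \<in> cball c \<rho>" by (auto simp: B_def)
      moreover have "m S \<in> convex hull S" using m_hull S by auto
      ultimately show "S \<in> {S. S \<subseteq> P \<and> card S = r \<and> convex hull S \<inter> cball c \<rho> \<noteq> {}}" using S by auto
    qed
    have "card (?U - B) \<le> card {S. S \<subseteq> P \<and> card S = r \<and> convex hull S \<inter> cball c \<rho> \<noteq> {}}"
      by (rule card_mono[OF finite_subset[OF Gsub fU] sub])
    moreover have "card (?U - B) = (n choose r) - card B"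
    proof -
      have "B \<subseteq> ?U" by (auto simp: B_def)
      then show ?thesis using card_Diff_subset[OF fB] cardU by simp
    qed
    moreover have "card B \<le> n choose r" using cardU card_mono[OF fU, of B] by (auto simp: B_def)
    ultimately have G: "real (n choose r) - real (card B) \<le> real (card {S. S \<subseteq> P \<and> card S = r \<and> convex hull S \<inter> cball c \<rho> \<noteq> {}})"
      by simp
    have "real r ^ 1 \<le> real r ^ r" using assms rpos by (intro power_increasing) auto
    then have h1: "real r \<le> real r ^ r" by (simp only: power_one_right)
    have "real r \<ge> 2" using r2 by simp
    with h1 have rr: "real r ^ r \<ge> 2" by linarith
    have "real (n choose r) / real r ^ r \<le> real (n choose r) / 2"
      using rr by (intro divide_left_mono) auto
    also have "\<dots> \<le> real (n choose r) - real (card B)" using cB by simp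
    finally show ?thesis using G unfolding \<rho>_def D_def by (intro exI[of _ c]) linarith
  qed
qed

end
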